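(* In the standing setup with a single fluid, and with $t_{\mathrm b},\xi_{\mathrm b},\xi_0,t_0$ as in the time-interval setup, the duration $\Delta t_{\mathrm b0}=t_0-t_{\mathrm b}$ satisfies $$\Delta t_{\mathrm b0}\ \ge\ \frac{1}{2\sqrt{2\xi_0}}\,\frac{1}{c\,l}\,(\xi_0-\xi_{\mathrm b}).$$
   Context: Standing setup. Fix real constants $c>0$ and $l>0$, a nonempty finite index set $A$, and constants $w_\alpha\in[-1,1]$ for $\alpha\in A$. Let $I\subseteq\mathbb{R}$ be an interval and let $x,y_{\mathrm r},y_{\mathrm i},h,z_\alpha$ ($\alpha\in A$) be real $C^1$ functions of $t\in I$ with $h>0$ and $z_\alpha\ge 0$. Define $\xi(t)=x(t)^2+\sum_{\beta\in A}\frac{1+w_\beta}{2}z_\beta(t)^2$. Assume that on $I$: $\dot x=\big[-x+4c\,y_{\mathrm r}y_{\mathrm i}+x\,\xi\big]h$, $\dot y_{\mathrm r}=\big[\xi\,y_{\mathrm r}-c\,x\,y_{\mathrm i}\big]h$, $\dot y_{\mathrm i}=\big[\xi\,y_{\mathrm i}+c\,x\,y_{\mathrm r}\big]h$, $\dot z_\alpha=\big[-\tfrac{1+w_\alpha}{2}+\xi\big]z_\alpha h$, $\dot h=-\xi h^2$, together with the constraints $x^2+4y_{\mathrm r}^2+\sum_{\beta\in A}z_\beta^2=1$ and $y_{\mathrm r}^2+y_{\mathrm i}^2=\frac{l^2}{2h^2}$. Single fluid: $A$ has exactly one element; write $z$ and $w$ for $z_\alpha$ and $w_\alpha$. Time-interval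 setup: let $t_{\mathrm b}\in I$, $\xi_{\mathrm b}:=\xi(t_{\mathrm b})$, and let $\xi_0$ be a real number with $\xi_0>0$ and $\xi_{\mathrm b}\le\xi_0\le\frac{1+w}{2}$. Assume the set $\{t\in I:\ t\ge t_{\mathrm b},\ \xi(t)=\xi_0\}$ is nonempty and let $t_0$ be its minimum (so $\xi(t)\le\xi_0$ for all $t\in[t_{\mathrm b},t_0]$); put $\Delta t_{\mathrm b0}=t_0-t_{\mathrm b}$. *)

theory Defs
  imports "HOL-Analysis.Analysis"
begin

definition xi_sf :: "(real \<Rightarrow> real) \<Rightarrow> (real \<Rightarrow> real) \<Rightarrow> real \<Rightarrow> real \<Rightarrow> real" where
  "xi_sf x z w t = (x t)^2 + (1 + w) / 2 * (z t)^2"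

end

theory Submission
  imports Defs
begin

theorem lemma2:
  fixes c l w :: real and I :: "real set"
    and x yr yi h z dx dyr dyi dh dz :: "real \<Rightarrow> real"
    and tb t0 \<xi>0 :: real
  assumes c_pos: "c > 0" and l_pos: "l > 0"
    and w_range: "-1 \<le> w" "w \<le> 1"
    and I_int: "is_interval I"
    and dx: "\<And>t. t \<in> I \<Longrightarrow> (x has_real_derivative dx t) (at t within I)"
    and dyr: "\<And>t. t \<in> I \<Longrightarrow> (yr has_real_derivative dyr t) (at t within I)"
    and dyi: "\<And>t. t \<in> I \<Longrightarrow> (yi has_real_derivative dyi t) (at t within I)"
    and dh: "\<And>t. t \<in> I \<Longrightarrow> (h has_real_derivative dh t) (at t within I)"
    and dz: "\<And>t. t \<in> I \<Longrightarrow> (z has_real_derivative dz t) (at t within I)"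
    and C1: "continuous_on I dx" "continuous_on I dyr" "continuous_on I dyi"
            "continuous_on I dh" "continuous_on I dz"
    and h_pos: "\<And>t. t \<in> I \<Longrightarrow> h t > 0"
    and z_nn: "\<And>t. t \<in> I \<Longrightarrow> z t \<ge> 0"
    and ode_x: "\<And>t. t \<in> I \<Longrightarrow>
       dx t = (- x t + 4 * c * yr t * yi t + x t * xi_sf x z w t) * h t"
    and ode_yr: "\<And>t. t \<in> I \<Longrightarrow> dyr t = (xi_sf x z w t * yr t - c * x t * yi t) * h t"
    and ode_yi: "\<And>t. t \<in> I \<Longrightarrow> dyi t = (xi_sf x z w t * yi t + c * x t * yr t) * h t"
    and ode_z: "\<And>t. t \<in> I \<Longrightarrow> dz t = (- ((1 + w) / 2) + xi_sf x z w t) * z t * h t"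
    and ode_h: "\<And>t. t \<in> I \<Longrightarrow> dh t = - xi_sf x z w t * (h t)^2"
    and constr1: "\<And>t. t \<in> I \<Longrightarrow> (x t)^2 + 4 * (yr t)^2 + (z t)^2 = 1"
    and constr2: "\<And>t. t \<in> I \<Longrightarrow> (yr t)^2 + (yi t)^2 = l^2 / (2 * (h t)^2)"
    and tb_I: "tb \<in> I"
    and xi0_pos: "\<xi>0 > 0"
    and xi0_ge: "xi_sf x z w tb \<le> \<xi>0"
    and xi0_le: "\<xi>0 \<le> (1 + w) / 2"
    and t0_in: "t0 \<in> I" "t0 \<ge> tb" "xi_sf x z w t0 = \<xi>0"
    and t0_min: "\<And>t. t \<in> I \<Longrightarrow> t \<ge> tb \<Longrightarrow> xi_sf x z w t = \<xi>0 \<Longrightarrow> t0 \<le> t"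
  shows "t0 - tb \<ge> 1 / (2 * sqrt (2 * \<xi>0)) * (1 / (c * l)) * (\<xi>0 - xi_sf x z w tb)"
proof -
  define k where "k = (1 + w) / 2"
  have k01: "0 \<le> k" "k \<le> 1" using w_range by (auto simp: k_def)
  define X where "X = xi_sf x z w"
  define D where "D = (\<lambda>t. 2 * x t * dx t + k * (2 * z t * dz t))"
  have X_eq: "\<And>t. X t = (x t)^2 + k * (z t)^2" by (simp add: X_def xi_sf_def k_def)
  have Xfun: "X = (\<lambda>t. (x t)^2 + k * (z t)^2)" by (rule ext) (simp add: X_eq)
  have dX: "(X has_real_derivative D t) (at t within I)" if "t \<in> I" for t
  proof -
    have e: "D t = of_nat 2 * (dx t * x t ^ (2 - Suc 0)) + k * (of_nat 2 * (dz t * z t ^ (2 - Suc 0)))"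
      by (simp add: D_def)
    show ?thesis unfolding e Xfun
      by (rule DERIV_add[OF DERIV_power[OF dx[OF that]] DERIV_cmult[OF DERIV_power[OF dz[OF that]]]])
  qed
  have contX: "continuous_on I X"
    by (rule DERIV_continuous_on[OF dX])
  define B where "B = 2 * sqrt (2 * \<xi>0) * c * l"
  have sub: "{tb..t0} \<subseteq> I"
  proof
    fix s assume "s \<in> {tb..t0}"
    hence "tb \<le> s" "s \<le> t0" by auto
    then show "s \<in> I" using is_interval_1[THEN iffD1, OF I_int] tb_I t0_in(1) by blast
  qed
  have Xle: "X t \<le> \<xi>0" if "t \<in> {tb..t0}" for t
  proof (rule ccontr)
    assume "\<not> X t \<le> \<xi>0"
    hence gt: "X t > \<xi>0" by simp
    have tt: "tb \<le> t" "t \<le> t0" using that by auto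
    have cont: "continuous_on {tb..t} X"
    proof (rule continuous_on_subset[OF contX])
      show "{tb..t} \<subseteq> I" using sub tt by auto
    qed
    have "\<exists>s. tb \<le> s \<and> s \<le> t \<and> X s = \<xi>0"
      by (rule IVT'[OF _ _ tt(1) cont]) (use xi0_ge gt in \<open>auto simp: X_def\<close>)
    then obtain s where s: "tb \<le> s" "s \<le> t" "X s = \<xi>0" by blast
    have "s \<noteq> t" using s gt by auto
    hence "s < t0" using s that by auto
    moreover have "s \<in> I" using s sub that by auto
    ultimately show False using t0_min[of s] s unfolding X_def by force
  qed
  have Dle: "D t \<le> B" if tI: "t \<in> I" and Xt: "X t \<le> \<xi>0" for t
  proof -
    let ?x = "x t" and ?yr = "yr t" and ?yi = "yi t" and ?h = "h t" and ?z = "z t"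
    have hp: "?h > 0" using h_pos tI .
    have D_eq: "D t = 2 * ?h * ((X t)^2 - ?x^2 - k^2 * ?z^2) + 8 * c * ?h * ?x * ?yr * ?yi"
    proof -
      have ex: "dx t = (- ?x + 4 * c * ?yr * ?yi + ?x * X t) * ?h"
        using ode_x[OF tI] by (simp add: X_def)
      have ez: "dz t = (- k + X t) * ?z * ?h"
        using ode_z[OF tI] by (simp add: X_def k_def)
      show ?thesis unfolding D_def ex ez X_eq by (simp add: power2_eq_square algebra_simps)
    qed
    have c1: "?x^2 + ?z^2 \<le> 1" using constr1[OF tI] by (smt (verit) zero_le_power2)
    have cs: "(X t)^2 \<le> (?x^2 + ?z^2) * (?x^2 + k^2 * ?z^2)"
    proof -
      have "(?x^2 + ?z^2) * (?x^2 + k^2 * ?z^2) - (X t)^2 = ?x^2 * ?z^2 * (1 - k)^2"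
        by (simp add: X_eq power2_eq_square algebra_simps)
      moreover have "?x^2 * ?z^2 * (1 - k)^2 \<ge> 0" by simp
      ultimately show ?thesis by linarith
    qed
    have "(?x^2 + ?z^2) * (?x^2 + k^2 * ?z^2) \<le> 1 * (?x^2 + k^2 * ?z^2)"
      by (rule mult_right_mono[OF c1]) simp
    with cs have q: "(X t)^2 - ?x^2 - k^2 * ?z^2 \<le> 0" by simp
    have t1: "2 * ?h * ((X t)^2 - ?x^2 - k^2 * ?z^2) \<le> 0"
      using q hp by (simp add: mult_nonneg_nonpos)
    have hyi2: "(?h * ?yi)^2 \<le> l^2 / 2"
    proof -
      have "(?h * ?yi)^2 \<le> ?h^2 * (?yr^2 + ?yi^2)" by (simp add: power_mult_distrib algebra_simps)
      also have "\<dots> = l^2 / 2" using constr2[OF tI] hp by (simp add: field_simps)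
      finally show ?thesis .
    qed
    have hyi: "\<bar>?h * ?yi\<bar> \<le> l / sqrt 2"
    proof -
      have "\<bar>?h * ?yi\<bar> = sqrt ((?h * ?yi)^2)" by simp
      also have "\<dots> \<le> sqrt (l^2 / 2)" using hyi2 by (rule real_sqrt_le_mono)
      also have "\<dots> = l / sqrt 2" using l_pos by (simp add: real_sqrt_divide)
      finally show ?thesis .
    qed
    have xb: "\<bar>?x\<bar> \<le> sqrt \<xi>0"
    proof -
      have "?x^2 \<le> \<xi>0" using Xt X_eq[of t] k01 by (smt (verit) mult_nonneg_nonneg zero_le_power2)
      hence "sqrt (?x^2) \<le> sqrt \<xi>0" by (rule real_sqrt_le_mono)
      thus ?thesis by simp
    qed
    have yrb: "2 * \<bar>?yr\<bar> \<le> 1"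
    proof -
      have "(2 * \<bar>?yr\<bar>)^2 \<le> 1^2" using constr1[OF tI] by (simp add: power_mult_distrib) (smt (verit) zero_le_power2)
      thus ?thesis by (rule power2_le_imp_le) simp
    qed
    have "8 * c * ?h * ?x * ?yr * ?yi \<le> 4 * c * (\<bar>?x\<bar> * (2 * \<bar>?yr\<bar>) * \<bar>?h * ?yi\<bar>)"
    proof -
      have "8 * c * ?h * ?x * ?yr * ?yi \<le> \<bar>8 * c * ?h * ?x * ?yr * ?yi\<bar>" by simp
      also have "\<dots> = 4 * c * (\<bar>?x\<bar> * (2 * \<bar>?yr\<bar>) * \<bar>?h * ?yi\<bar>)"
        using c_pos by (simp add: abs_mult)
      finally show ?thesis .
    qed
    also have "\<dots> \<le> 4 * c * (sqrt \<xi>0 * 1 * (l / sqrt 2))"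
      using c_pos xb yrb hyi xi0_pos
      by (intro mult_left_mono mult_mono) auto
    also have "\<dots> = B"
      unfolding B_def using xi0_pos
      by (simp add: real_sqrt_mult field_simps)
    finally have "8 * c * ?h * ?x * ?yr * ?yi \<le> B" .
    with t1 D_eq show ?thesis by linarith
  qed
  have Bpos: "B > 0" unfolding B_def using xi0_pos c_pos l_pos by simp
  have main: "\<xi>0 - X tb \<le> (t0 - tb) * B"
  proof (cases "tb < t0")
    case False
    hence "t0 = tb" using t0_in by simp
    thus ?thesis using t0_in(3) unfolding X_def by simp
  next
    case True
    have "\<And>s. tb \<le> s \<Longrightarrow> s \<le> t0 \<Longrightarrow> (X has_derivative (*) (D s)) (at s within {tb..t0})"
    proof -
      fix s assume "tb \<le> s" "s \<le> t0"
      hence "s \<in> I" using sub by auto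
      have "(X has_real_derivative D s) (at s within {tb..t0})"
        by (rule has_field_derivative_subset[OF dX[OF \<open>s \<in> I\<close>] sub])
      thus "(X has_derivative (*) (D s)) (at s within {tb..t0})"
        by (simp add: has_field_derivative_def)
    qed
    then obtain s where s: "s \<in> {tb<..<t0}" "X t0 - X tb = D s * (t0 - tb)"
      using mvt_simple[OF True, of X "\<lambda>s. (*) (D s)"] by blast
    have sI: "s \<in> I" using s sub by auto
    have "D s \<le> B" using Dle[OF sI Xle] s by auto
    hence "D s * (t0 - tb) \<le> (t0 - tb) * B" using True by (simp add: mult.commute mult_left_mono)
    thus ?thesis using s t0_in(3) unfolding X_def by simp
  qed
  have "1 / (2 * sqrt (2 * \<xi>0)) * (1 / (c * l)) * (\<xi>0 - X tb) = (\<xi>0 - X tb) / B"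
    unfolding B_def by (simp add: field_simps)
  also have "\<dots> \<le> t0 - tb" using main Bpos by (simp add: divide_le_eq)
  finally show ?thesis unfolding X_def .
qed

end
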